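(* Let $\mathcal{H},\mathcal{K}$ be complex Hilbert spaces and $(f_*,f^* ):(\mathsf{P}(\mathcal{H}),\mathsf{L}(\mathcal{H}),\bar e_{\mathcal{H}})\to(\mathsf{P}(\mathcal{K}),\mathsf{L}(\mathcal{K}),\bar e_{\mathcal{K}})$ a Chu morphism. Then for every nonzero $\psi\in\mathcal{H}$ and every $S\in\mathsf{L}(\mathcal{K})$: $[\psi]\subseteq f^*(S)$ if and only if $f_*([\psi])\subseteq S$.
   Context: A Chu morphism $(X,A,e)\to(X',A',e')$ between Chu spaces over $[0,1]$ is a pair $(f_*:X\to X',f^*:A'\to A)$ with $e(x,f^*(a'))=e'(f_*(x),a')$ for all $x,a'$. For a complex Hilbert space $\mathcal{H}$: $\mathsf{L}(\mathcal{H})$ is the set of closed subspaces, $P_S$ the orthogonal projector onto $S$, $\mathsf{P}(\mathcal{H})$ the set of rays $[\psi]=\{\lambda\psi:\lambda\in\mathbb{C}\}$, $\psi\ne0$, and $\bar e_{\mathcal{H}}([\psi],S)=\|P_S\psi\|^2/\|\psi\|^2$. *)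

theory Defs
  imports "HOL-Analysis.Analysis"
begin

text \<open>The (real) inner product is the real part of the complex inner product, which is
recovered by polarization.\<close>

class complex_hilbert = real_inner + complete_space +
  fixes scaleC :: "complex \<Rightarrow> 'a \<Rightarrow> 'a" (infixr \<open>*\<^sub>C\<close> 75)
  assumes scaleC_of_real: "scaleC (complex_of_real r) x = scaleR r x"
    and scaleC_add_left: "scaleC (a + b) x = scaleC a x + scaleC b x"
    and scaleC_add_right: "scaleC a (x + y) = scaleC a x + scaleC a y"
    and scaleC_scaleC: "scaleC a (scaleC b x) = scaleC (a * b) x"
    and scaleC_one: "scaleC 1 x = x"
    and norm_scaleC: "norm (scaleC a x) = cmod a * norm x"

definition csubspace :: "'a::complex_hilbert set \<Rightarrow> bool" where
  "csubspace S \<longleftrightarrow> 0 \<in> S \<and> (\<forall>x\<in>S. \<forall>y\<in>S. x + y \<in> S) \<and> (\<forall>c. \<forall>x\<in>S. c *\<^sub>C x \<in> S)"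

definition closed_subspaces :: "'a::complex_hilbert set set" where
  "closed_subspaces = {S. csubspace S \<and> closed S}"

definition proj :: "'a::complex_hilbert set \<Rightarrow> 'a \<Rightarrow> 'a" where
  "proj S x = (THE p. p \<in> S \<and> (\<forall>s\<in>S. inner (x - p) s = 0))"

definition ray :: "'a::complex_hilbert \<Rightarrow> 'a set" where
  "ray \<psi> = {c *\<^sub>C \<psi> | c. True}"

definition rays :: "'a::complex_hilbert set set" where
  "rays = {ray \<psi> | \<psi>. \<psi> \<noteq> 0}"

text \<open>The evaluation ebar([psi],S) = ||P_S psi||^2 / ||psi||^2 (independent of representative).\<close>
definition ebar :: "'a::complex_hilbert set \<Rightarrow> 'a set \<Rightarrow> real" where
  "ebar R S = (let \<psi> = (SOME \<psi>. \<psi> \<noteq> 0 \<and> R = ray \<psi>) in (norm (proj S \<psi>))\<^sup>2 / (norm \<psi>)\<^sup>2)"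

definition chu_morphism ::
  "'x set \<Rightarrow> 'a set \<Rightarrow> ('x \<Rightarrow> 'a \<Rightarrow> real) \<Rightarrow> 'y set \<Rightarrow> 'b set \<Rightarrow> ('y \<Rightarrow> 'b \<Rightarrow> real)
    \<Rightarrow> ('x \<Rightarrow> 'y) \<Rightarrow> ('b \<Rightarrow> 'a) \<Rightarrow> bool" where
  "chu_morphism X A e X' A' e' fl fu \<longleftrightarrow>
     (\<forall>x\<in>X. fl x \<in> X') \<and> (\<forall>a'\<in>A'. fu a' \<in> A) \<and>
     (\<forall>x\<in>X. \<forall>a'\<in>A'. e x (fu a') = e' (fl x) a')"

end

theory Submission
  imports Defs
begin

lemma cs_scaleR: "csubspace T \<Longrightarrow> x \<in> T \<Longrightarrow> r *\<^sub>R x \<in> T"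
  unfolding csubspace_def by (metis scaleC_of_real)

lemma cs_diff: "csubspace T \<Longrightarrow> x \<in> T \<Longrightarrow> y \<in> T \<Longrightarrow> x - y \<in> T"
proof -
  assume a: "csubspace T" "x \<in> T" "y \<in> T"
  have "(-1::real) *\<^sub>R y \<in> T" using cs_scaleR a by blast
  hence "x + (-1::real) *\<^sub>R y \<in> T" using a unfolding csubspace_def by blast
  thus ?thesis by simp
qed

lemma proj_exists:
  fixes x :: "'a::complex_hilbert"
  assumes T: "csubspace T" "closed T"
  shows "\<exists>p\<in>T. \<forall>s\<in>T. inner (x - p) s = 0"
proof -
  define d where "d = Inf ((\<lambda>s. norm (x - s)) ` T)"
  have T0: "0 \<in> T" using T unfolding csubspace_def by blast
  have bdd: "bdd_below ((\<lambda>s. norm (x - s)) ` T)" by (rule bdd_belowI[of _ 0]) auto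
  have dle: "d \<le> norm (x - q)" if "q \<in> T" for q
    unfolding d_def using bdd that by (simp add: cInf_lower)
  have d0: "0 \<le> d" using dle[OF T0] unfolding d_def
    using T0 by (auto intro!: cInf_greatest)
  define e where "e n = 1 / (real n + 1)" for n
  have epos: "e n > 0" for n unfolding e_def by simp
  have "\<exists>s\<in>T. norm (x - s) < d + e n" for n
  proof -
    have "Inf ((\<lambda>s. norm (x - s)) ` T) < d + e n" using epos[of n] d_def by simp
    moreover have "(\<lambda>s. norm (x - s)) ` T \<noteq> {}" using T0 by blast
    ultimately obtain y where "y \<in> (\<lambda>s. norm (x - s)) ` T" "y < d + e n"
      using cInf_lessD by metis
    thus ?thesis by auto
  qed
  then obtain s where sT: "\<And>n. s n \<in> T" and sl: "\<And>n. norm (x - s n) < d + e n"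
    by metis
  have sq: "(norm (x - s n))\<^sup>2 \<le> d\<^sup>2 + (2*d+1) * e n" for n
  proof -
    have e1: "e n \<le> 1" unfolding e_def by simp
    have "(norm (x - s n))\<^sup>2 \<le> (d + e n)\<^sup>2"
      using sl[of n] by (intro power_mono) auto
    also have "\<dots> = d\<^sup>2 + 2*d*e n + e n * e n" by (simp add: power2_eq_square algebra_simps)
    also have "\<dots> \<le> d\<^sup>2 + 2*d*e n + e n" using e1 epos[of n]
      by (simp add: mult_left_le)
    finally show ?thesis by (simp add: algebra_simps)
  qed
  have par: "(norm (s m - s n))\<^sup>2 \<le> 2*(2*d+1)*(e m + e n)" for m n
  proof -
    let ?a = "x - s m" and ?b = "x - s n"
    have pl: "(norm (?a - ?b))\<^sup>2 + (norm (?a + ?b))\<^sup>2 = 2*(norm ?a)\<^sup>2 + 2*(norm ?b)\<^sup>2"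
      by (simp add: power2_norm_eq_inner inner_add inner_diff inner_commute)
    have mid: "(1/2::real) *\<^sub>R (s m + s n) \<in> T"
      using cs_scaleR[OF T(1)] sT T(1) unfolding csubspace_def by blast
    have "?a + ?b = 2 *\<^sub>R (x - (1/2::real) *\<^sub>R (s m + s n))"
      by (simp add: algebra_simps scaleR_2)
    hence "norm (?a + ?b) = 2 * norm (x - (1/2::real) *\<^sub>R (s m + s n))" by simp
    hence "norm (?a + ?b) \<ge> 2 * d" using dle[OF mid] by simp
    hence "(norm (?a + ?b))\<^sup>2 \<ge> (2*d)\<^sup>2" using d0 by (intro power_mono) auto
    moreover have "?a - ?b = s n - s m" by simp
    moreover have "norm (s n - s m) = norm (s m - s n)" by (simp add: norm_minus_commute)
    ultimately show ?thesis using pl sq[of m] sq[of n]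
      by (simp add: power2_eq_square algebra_simps)
  qed
  have C: "Cauchy s"
  proof (rule CauchyI)
    fix r :: real assume r: "r > 0"
    have pos: "r\<^sup>2 / (4*(2*d+1)) > 0" using r d0 by simp
    obtain M where M: "inverse (real (Suc M)) < r\<^sup>2 / (4*(2*d+1))"
      using reals_Archimedean[OF pos] by blast
    show "\<exists>M. \<forall>m\<ge>M. \<forall>n\<ge>M. norm (s m - s n) < r"
    proof (intro exI allI impI)
      fix m n assume mn: "M \<le> m" "M \<le> n"
      have em: "e m \<le> inverse (real (Suc M))" "e n \<le> inverse (real (Suc M))"
        using mn unfolding e_def by (auto simp: field_simps)
      have "(norm (s m - s n))\<^sup>2 \<le> 2*(2*d+1)*(e m + e n)" by (rule par)
      also have "\<dots> \<le> 2*(2*d+1)*(2*inverse (real (Suc M)))"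
        using em d0 by (intro mult_left_mono) auto
      also have "\<dots> < 2*(2*d+1)*(2*(r\<^sup>2 / (4*(2*d+1))))"
        using M d0 by (intro mult_strict_left_mono) auto
      also have "\<dots> = r\<^sup>2" using d0 by (simp add: field_simps)
      finally have "(norm (s m - s n))\<^sup>2 < r\<^sup>2" .
      thus "norm (s m - s n) < r" using r by (simp add: power_less_imp_less_base)
    qed
  qed
  then obtain p where lim: "s \<longlonglongrightarrow> p" using Cauchy_convergent_iff convergent_def by blast
  have pT: "p \<in> T" using T(2) closed_sequentially sT lim by blast
  have "(\<lambda>n. norm (x - s n)) \<longlonglongrightarrow> norm (x - p)"
    by (intro tendsto_intros lim)
  moreover have "(\<lambda>n. d + e n) \<longlonglongrightarrow> d"
  proof -
    have "e = (\<lambda>n. inverse (real (Suc n)))" unfolding e_def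
      by (simp add: inverse_eq_divide add.commute)
    thus ?thesis using LIMSEQ_inverse_real_of_nat_add[of d] by simp
  qed
  ultimately have pd: "norm (x - p) \<le> d"
    by (rule LIMSEQ_le) (use sl less_imp_le in blast)
  have "inner (x - p) q = 0" if q: "q \<in> T" for q
  proof (cases "q = 0")
    case True thus ?thesis by simp
  next
    case False
    define r where "r = x - p"
    define t where "t = inner r q / (norm q)\<^sup>2"
    have qt: "p + t *\<^sub>R q \<in> T" using cs_scaleR[OF T(1) q] pT T(1) unfolding csubspace_def by blast
    have "(norm r)\<^sup>2 \<le> (norm (r - t *\<^sub>R q))\<^sup>2"
      using dle[OF qt] pd unfolding r_def by (intro power_mono) (auto simp: algebra_simps)
    also have "\<dots> = (norm r)\<^sup>2 - 2*t*inner r q + t*t*(norm q)\<^sup>2"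
      by (simp add: power2_norm_eq_inner inner_diff inner_commute algebra_simps)
    also have "\<dots> = (norm r)\<^sup>2 - (inner r q)\<^sup>2 / (norm q)\<^sup>2"
      using False unfolding t_def by (simp add: field_simps power2_eq_square)
    finally have "(inner r q)\<^sup>2 / (norm q)\<^sup>2 \<le> 0" by simp
    hence "(inner r q)\<^sup>2 \<le> 0" using False by (simp add: divide_le_0_iff)
    thus ?thesis unfolding r_def by simp
  qed
  thus ?thesis using pT by blast
qed

lemma proj_props:
  fixes x :: "'a::complex_hilbert"
  assumes "T \<in> closed_subspaces"
  shows "proj T x \<in> T \<and> (\<forall>s\<in>T. inner (x - proj T x) s = 0)"
proof -
  have T: "csubspace T" "closed T" using assms unfolding closed_subspaces_def by auto
  obtain p where p: "p \<in> T" "\<forall>s\<in>T. inner (x - p) s = 0" using proj_exists[OF T] by blast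
  have uniq: "q = p" if q: "q \<in> T" "\<forall>s\<in>T. inner (x - q) s = 0" for q
  proof -
    have d: "p - q \<in> T" using cs_diff[OF T(1) p(1) q(1)] .
    have 1: "inner (x - q) (p - q) = 0" using q(2) d by blast
    have 2: "inner (x - p) (p - q) = 0" using p(2) d by blast
    have "inner (p - q) (p - q) = inner (x - q) (p - q) - inner (x - p) (p - q)"
      by (simp only: inner_diff_left)
    hence "inner (p - q) (p - q) = 0" using 1 2 by simp
    thus ?thesis by simp
  qed
  have "proj T x = p" unfolding proj_def
  proof (rule the_equality)
    show "p \<in> T \<and> (\<forall>s\<in>T. inner (x - p) s = 0)" using p by blast
  next
    fix q assume "q \<in> T \<and> (\<forall>s\<in>T. inner (x - q) s = 0)"
    thus "q = p" using uniq by blast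
  qed
  thus ?thesis using p by simp
qed

lemma ray_mem: "\<psi> \<in> ray \<psi>"
proof -
  have "1 *\<^sub>C \<psi> \<in> ray \<psi>" unfolding ray_def by blast
  thus ?thesis by (simp add: scaleC_one)
qed

lemma ray_sub: "csubspace T \<Longrightarrow> ray \<psi> \<subseteq> T \<longleftrightarrow> \<psi> \<in> T"
  using ray_mem[of \<psi>] unfolding ray_def csubspace_def by blast

lemma ebar_one:
  fixes \<psi> :: "'a::complex_hilbert"
  assumes "\<psi> \<noteq> 0" "T \<in> closed_subspaces"
  shows "ebar (ray \<psi>) T = 1 \<longleftrightarrow> \<psi> \<in> T"
proof -
  have cs: "csubspace T" using assms unfolding closed_subspaces_def by auto
  define \<phi> where "\<phi> = (SOME \<phi>. \<phi> \<noteq> 0 \<and> ray \<psi> = ray \<phi>)"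
  have "\<phi> \<noteq> 0 \<and> ray \<psi> = ray \<phi>" unfolding \<phi>_def by (rule someI[of _ \<psi>]) (use assms in auto)
  hence ph: "\<phi> \<noteq> 0" "ray \<psi> = ray \<phi>" by auto
  have eb: "ebar (ray \<psi>) T = (norm (proj T \<phi>))\<^sup>2 / (norm \<phi>)\<^sup>2"
    unfolding ebar_def \<phi>_def Let_def ..
  have iff: "\<psi> \<in> T \<longleftrightarrow> \<phi> \<in> T"
    using ray_sub[OF cs, of \<psi>] ray_sub[OF cs, of \<phi>] ph by simp
  obtain P: "proj T \<phi> \<in> T" "\<forall>s\<in>T. inner (\<phi> - proj T \<phi>) s = 0"
    using proj_props[OF assms(2)] by blast
  let ?p = "proj T \<phi>"
  have n0: "(norm \<phi>)\<^sup>2 > 0" using ph by simp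
  have pyth: "(norm \<phi>)\<^sup>2 = (norm ?p)\<^sup>2 + (norm (\<phi> - ?p))\<^sup>2"
  proof -
    have "inner (\<phi> - ?p) ?p = 0" using P by blast
    hence "inner ?p \<phi> = inner ?p ?p" by (simp add: inner_diff inner_commute)
    thus ?thesis by (simp add: power2_norm_eq_inner inner_diff inner_commute)
  qed
  show ?thesis
  proof
    assume "ebar (ray \<psi>) T = 1"
    hence "(norm ?p)\<^sup>2 = (norm \<phi>)\<^sup>2" using eb n0 by (simp add: divide_eq_1_iff)
    hence "norm (\<phi> - ?p) = 0" using pyth by simp
    hence "\<phi> = ?p" by simp
    thus "\<psi> \<in> T" using iff P by simp
  next
    assume "\<psi> \<in> T"
    hence pT: "\<phi> \<in> T" using iff by simp
    have "\<phi> - ?p \<in> T" using cs_diff[OF cs pT P(1)] .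
    hence "inner (\<phi> - ?p) (\<phi> - ?p) = 0" using P by blast
    hence "?p = \<phi>" by simp
    thus "ebar (ray \<psi>) T = 1" using eb n0 by simp
  qed
qed

theorem proposition3p4:
  fixes fl :: "'a::complex_hilbert set \<Rightarrow> 'b::complex_hilbert set"
    and fu :: "'b set \<Rightarrow> 'a set"
    and \<psi> :: 'a and S :: "'b set"
  assumes "chu_morphism (rays :: 'a set set) (closed_subspaces :: 'a set set) ebar
             (rays :: 'b set set) (closed_subspaces :: 'b set set) ebar fl fu"
    and "\<psi> \<noteq> 0"
    and "S \<in> closed_subspaces"
  shows "ray \<psi> \<subseteq> fu S \<longleftrightarrow> fl (ray \<psi>) \<subseteq> S"
proof -
  have R: "ray \<psi> \<in> rays" using assms(2) unfolding rays_def by blast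
  have fS: "fu S \<in> closed_subspaces" and fR: "fl (ray \<psi>) \<in> rays"
    and eq: "ebar (ray \<psi>) (fu S) = ebar (fl (ray \<psi>)) S"
    using assms(1) R assms(3) unfolding chu_morphism_def by auto
  obtain \<phi> :: 'b where ph: "\<phi> \<noteq> 0" "fl (ray \<psi>) = ray \<phi>" using fR unfolding rays_def by blast
  have c1: "csubspace (fu S)" using fS unfolding closed_subspaces_def by auto
  have c2: "csubspace S" using assms(3) unfolding closed_subspaces_def by auto
  have "ray \<psi> \<subseteq> fu S \<longleftrightarrow> ebar (ray \<psi>) (fu S) = 1"
    using ray_sub[OF c1] ebar_one[OF assms(2) fS] by simp
  also have "\<dots> \<longleftrightarrow> ebar (ray \<phi>) S = 1" using eq ph by simp
  also have "\<dots> \<longleftrightarrow> fl (ray \<psi>) \<subseteq> S"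
    using ray_sub[OF c2] ebar_one[OF ph(1) assms(3)] ph by simp
  finally show ?thesis .
qed

end
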